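(* Let $A$ be a circular $m\times n$ matrix and $\alpha$ a positive integer. Let $\Gamma$ be a circuit in $F(A)$ with $s$ row arcs and winding number $p$, such that $p$ does not divide $t(\Gamma,\alpha\mathbf{1})$ and $2\le p\le t(\Gamma,\alpha\mathbf{1})-1$. Let $r:=\alpha s-p\lfloor \alpha s/p\rfloor$. Then the $\Gamma$-inequality for $Q^*(A,\alpha\mathbf{1})$ (i.e. with $b=\alpha\mathbf{1}$) has the form $$r\sum_{j\notin\otimes(\Gamma)}x_j+(r+1)\sum_{j\in\otimes(\Gamma)}x_j\ge r\left\lceil\frac{\alpha s}{p}\right\rceil.$$ Moreover, if $\alpha=1$ and $\otimes(\Gamma)\neq\emptyset$, this inequality is the row family inequality induced by $F:=\{i\in[m]: a_i \text{ is a row arc of }\Gamma\}$.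
   Context: Notation: $[n]=\{1,\dots,n\}$ with addition mod $n$ (index $0$ identified with $n$); for $a,c\in[n]$ with $t\ge0$ minimal such that $a+t\equiv c\pmod n$, $[a,c)_n=\{a,\dots,a+t-1\}$ (mod $n$). An $m\times n$ $\{0,1\}$-matrix $A=(a_{ij})$ is circular if for each row $i$ there are $\ell_i\in[n]$ and an integer $2\le k_i\le n-1$ with row $i$ the incidence vector of $[\ell_i,\ell_i+k_i)_n$. $Q(A,b)=\{x\ge0:Ax\ge b\}$, $Q^*(A,b)=\operatorname{conv}(Q(A,b)\cap\mathbb{Z}^n)$. $D(A)$: node set $[n]$; forward row arcs $a_i=(\ell_i-1,\ell_i+k_i-1)$, forward short arcs $(j-1,j)$, reverse row arcs $\bar a_i=(\ell_i+k_i-1,\ell_i-1)$, reverse short arcs $(j,j-1)$, with lengths $k_i,1,-k_i,-1$. $F(A)$ is $D(A)$ with all reverse row arcs removed. A circuit is a simple directed circuit; winding number $p(\Gamma)$: $p(\Gamma)n=$ sum of arc lengths. A forward row arc $a_i$ jumps over $j$ iff $j\in[\ell_i,\ell_i+k_i)_n$; $(j-1,j)$ jumps over $j$ only; a reverse arc jumps over $j$ iff its antiparallel forward arc does; $p^-(\Gamma,j)$ = number of reverse arcs of $\Gamma$ jumping over $j$. $\otimes(\Gamma)=\{j\in[n]:(j,j-1)\in E(\Gamma)\}$. For a circuit $\Gamma$ and $b\in\mathbb{Z}_+^m$: $t(\Gamma,b)=\sum_{i:a_i\in E(\Gamma)}b_i-\sum_{i:\bar a_i\in E(\Gamma)}b_i$;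 for $p(\Gamma)\ne0$, $\beta=\lfloor t(\Gamma,b)/p(\Gamma)\rfloor$, $\rho=t(\Gamma,b)-\beta p(\Gamma)$, and the $\Gamma$-inequality is $\sum_{j}[p^-(\Gamma,j)+\rho]x_j\ge\rho(\beta+1)+\sum_{i:\bar a_i\in E(\Gamma)}b_i$. Row family inequalities: for $F\subseteq[m]$ with $s=|F|\ge2$ and integer $1\le p\le s-1$ not dividing $s$, let $r=s-p\lfloor s/p\rfloor$, $I(F,p)=\{j:\sum_{i\in F}a_{ij}\le p\}$, $O(F,p)=\{j:\sum_{i\in F}a_{ij}=p+1\}$; the rfi induced by $(F,p)$ is $(r+1)\sum_{j\in O(F,p)}x_j+r\sum_{j\in I(F,p)}x_j\ge r\lceil s/p\rceil$. The rfi induced by $F$ is the one induced by $(F,p^* )$ with $p^*=\max_j\sum_{i\in F}a_{ij}-1$. *)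

theory Defs
  imports Complex_Main
begin

text \<open>Nodes/columns are [n] = {1..n}, rows are [m] = {1..m}. Indices are reduced
 circularly modulo n with 0 identified with n.\<close>

definition cmod :: "nat \<Rightarrow> nat \<Rightarrow> nat" where
  "cmod n x = (x + n - 1) mod n + 1"

definition cint :: "nat \<Rightarrow> nat \<Rightarrow> nat \<Rightarrow> nat set" where
  "cint n a kk = {cmod n (a + t) | t. t < kk}"

text \<open>A circular m x n matrix A is given by the data l_i, k_i of its rows:
 row i is the incidence vector of [l_i, l_i + k_i)_n.\<close>
definition circular :: "nat \<Rightarrow> nat \<Rightarrow> (nat \<Rightarrow> nat) \<Rightarrow> (nat \<Rightarrow> nat) \<Rightarrow> bool" where
  "circular n m l k \<longleftrightarrow> (\<forall>i\<in>{1..m}. l i \<in> {1..n} \<and> 2 \<le> k i \<and> k i \<le> n - 1)"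

definition circ_entry :: "nat \<Rightarrow> (nat \<Rightarrow> nat) \<Rightarrow> (nat \<Rightarrow> nat) \<Rightarrow> nat \<Rightarrow> nat \<Rightarrow> int" where
  "circ_entry n l k i j = (if j \<in> cint n (l i) (k i) then 1 else 0)"

text \<open>Arcs of D(A): forward row arc a_i, forward short arc (j-1,j),
 reverse row arc, reverse short arc (j,j-1).\<close>
datatype arc = RowF nat | ShortF nat | RowR nat | ShortR nat

fun arc_tail :: "nat \<Rightarrow> (nat \<Rightarrow> nat) \<Rightarrow> (nat \<Rightarrow> nat) \<Rightarrow> arc \<Rightarrow> nat" where
  "arc_tail n l k (RowF i) = cmod n (l i - 1)"
| "arc_tail n l k (ShortF j) = cmod n (j - 1)"
| "arc_tail n l k (RowR i) = cmod n (l i + k i - 1)"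
| "arc_tail n l k (ShortR j) = j"

fun arc_head :: "nat \<Rightarrow> (nat \<Rightarrow> nat) \<Rightarrow> (nat \<Rightarrow> nat) \<Rightarrow> arc \<Rightarrow> nat" where
  "arc_head n l k (RowF i) = cmod n (l i + k i - 1)"
| "arc_head n l k (ShortF j) = j"
| "arc_head n l k (RowR i) = cmod n (l i - 1)"
| "arc_head n l k (ShortR j) = cmod n (j - 1)"

fun arc_len :: "(nat \<Rightarrow> nat) \<Rightarrow> arc \<Rightarrow> int" where
  "arc_len k (RowF i) = int (k i)"
| "arc_len k (ShortF j) = 1"
| "arc_len k (RowR i) = - int (k i)"
| "arc_len k (ShortR j) = -1"

fun is_reverse :: "arc \<Rightarrow> bool" where
  "is_reverse (RowR i) = True"
| "is_reverse (ShortR j) = True"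
| "is_reverse _ = False"

fun jumps :: "nat \<Rightarrow> (nat \<Rightarrow> nat) \<Rightarrow> (nat \<Rightarrow> nat) \<Rightarrow> arc \<Rightarrow> nat \<Rightarrow> bool" where
  "jumps n l k (RowF i) j = (j \<in> cint n (l i) (k i))"
| "jumps n l k (ShortF j') j = (j = j')"
| "jumps n l k (RowR i) j = (j \<in> cint n (l i) (k i))"
| "jumps n l k (ShortR j') j = (j = j')"

definition arcs_D :: "nat \<Rightarrow> nat \<Rightarrow> arc set" where
  "arcs_D n m = RowF ` {1..m} \<union> ShortF ` {1..n} \<union> RowR ` {1..m} \<union> ShortR ` {1..n}"

definition arcs_F :: "nat \<Rightarrow> nat \<Rightarrow> arc set" where
  "arcs_F n m = RowF ` {1..m} \<union> ShortF ` {1..n} \<union> ShortR ` {1..n}"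

definition is_circuit :: "nat \<Rightarrow> (nat \<Rightarrow> nat) \<Rightarrow> (nat \<Rightarrow> nat) \<Rightarrow> arc set \<Rightarrow> arc list \<Rightarrow> bool" where
  "is_circuit n l k E cs \<longleftrightarrow> cs \<noteq> [] \<and> set cs \<subseteq> E \<and>
     distinct (map (arc_tail n l k) cs) \<and>
     (\<forall>q < length cs. arc_head n l k (cs ! q) = arc_tail n l k (cs ! ((q + 1) mod length cs)))"

definition winding :: "nat \<Rightarrow> (nat \<Rightarrow> nat) \<Rightarrow> arc list \<Rightarrow> int" where
  "winding n k cs = sum_list (map (arc_len k) cs) div int n"

definition pminus :: "nat \<Rightarrow> (nat \<Rightarrow> nat) \<Rightarrow> (nat \<Rightarrow> nat) \<Rightarrow> arc list \<Rightarrow> nat \<Rightarrow> nat" where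
  "pminus n l k cs j = card {e \<in> set cs. is_reverse e \<and> jumps n l k e j}"

definition otimes :: "nat \<Rightarrow> arc list \<Rightarrow> nat set" where
  "otimes n cs = {j \<in> {1..n}. ShortR j \<in> set cs}"

definition tval :: "nat \<Rightarrow> arc list \<Rightarrow> (nat \<Rightarrow> int) \<Rightarrow> int" where
  "tval m cs b = (\<Sum>i \<in> {i \<in> {1..m}. RowF i \<in> set cs}. b i)
               - (\<Sum>i \<in> {i \<in> {1..m}. RowR i \<in> set cs}. b i)"

text \<open>The Gamma-inequality  sum_j c_j x_j \<ge> rhs, as the pair (c, rhs)
 (c is meaningful on [n]).\<close>
definition gamma_ineq :: "nat \<Rightarrow> nat \<Rightarrow> (nat \<Rightarrow> nat) \<Rightarrow> (nat \<Rightarrow> nat) \<Rightarrow> arc list \<Rightarrow> (nat \<Rightarrow> int)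
    \<Rightarrow> (nat \<Rightarrow> int) \<times> int" where
  "gamma_ineq n m l k cs b =
     (let p = winding n k cs; t = tval m cs b;
          \<beta> = \<lfloor>real_of_int t / real_of_int p\<rfloor>; \<rho> = t - \<beta> * p
      in (\<lambda>j. int (pminus n l k cs j) + \<rho>,
          \<rho> * (\<beta> + 1) + (\<Sum>i \<in> {i \<in> {1..m}. RowR i \<in> set cs}. b i)))"

definition rfi_valid :: "nat set \<Rightarrow> int \<Rightarrow> bool" where
  "rfi_valid F p \<longleftrightarrow> card F \<ge> 2 \<and> 1 \<le> p \<and> p \<le> int (card F) - 1 \<and> \<not> p dvd int (card F)"

definition rfi :: "(nat \<Rightarrow> nat \<Rightarrow> int) \<Rightarrow> nat set \<Rightarrow> int \<Rightarrow> (nat \<Rightarrow> int) \<times> int" where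
  "rfi a F p =
     (let s = int (card F); r = s - p * \<lfloor>real_of_int s / real_of_int p\<rfloor>
      in (\<lambda>j. if (\<Sum>i\<in>F. a i j) \<le> p then r
              else if (\<Sum>i\<in>F. a i j) = p + 1 then r + 1 else 0,
          r * \<lceil>real_of_int s / real_of_int p\<rceil>))"

definition pstar :: "nat \<Rightarrow> (nat \<Rightarrow> nat \<Rightarrow> int) \<Rightarrow> nat set \<Rightarrow> int" where
  "pstar n a F = Max ((\<lambda>j. \<Sum>i\<in>F. a i j) ` {1..n}) - 1"

end

theory Submission
  imports Defs
begin


lemma cmod_range: "n > 0 \<Longrightarrow> cmod n y \<in> {1..n}"
  unfolding cmod_def by (simp add: Suc_leI)

lemma cmod_mod: "n > 0 \<Longrightarrow> cmod n y mod n = y mod n"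
proof -
  assume n: "n > 0"
  have "cmod n y mod n = Suc ((y + n - 1) mod n) mod n" unfolding cmod_def by simp
  also have "\<dots> = Suc (y + n - 1) mod n" by (rule mod_Suc_eq)
  also have "Suc (y + n - 1) = y + n" using n by simp
  finally show ?thesis by simp
qed

lemma one_n_eq: "(n::nat) > 0 \<Longrightarrow> x \<in> {1..n} \<Longrightarrow> y \<in> {1..n} \<Longrightarrow> x mod n = y mod n \<Longrightarrow> x = y"
proof -
  assume a: "n > 0" "x \<in> {1..n}" "y \<in> {1..n}" "x mod n = y mod n"
  have h: "z mod n = (if z = n then 0 else z)" if "z \<in> {1..n}" for z
  proof (cases "z = n")
    case False
    then have "z < n" using that by auto
    then show ?thesis by simp
  qed simp
  show ?thesis using h[OF a(2)] h[OF a(3)] a by (auto split: if_splits)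
qed

lemma cmod_eq_iff: "n > 0 \<Longrightarrow> x \<in> {1..n} \<Longrightarrow> (cmod n y = x) \<longleftrightarrow> x mod n = y mod n"
proof -
  assume n: "n > 0" and x: "x \<in> {1..n}"
  show ?thesis using cmod_mod[OF n, of y] cmod_range[OF n, of y] one_n_eq[OF n x, of "cmod n y"] by auto
qed

lemma cmod_id: "x \<in> {1..n} \<Longrightarrow> cmod n x = x"
  using cmod_eq_iff by fastforce

lemma nat_mod_int: "(x::nat) mod n = y mod n \<longleftrightarrow> (int x - int a) mod int n = (int y - int a) mod int n"
proof -
  have "x mod n = y mod n \<longleftrightarrow> int x mod int n = int y mod int n"
    by (simp flip: of_nat_mod)
  also have "\<dots> \<longleftrightarrow> (int x - int a) mod int n = (int y - int a) mod int n"
    using mod_diff_cong[of "int x" "int n" "int y" "int a" "int a"]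
          mod_add_cong[of "int x - int a" "int n" "int y - int a" "int a" "int a"] by auto
  finally show ?thesis .
qed

lemma cmod_eq_iff_int: "n > 0 \<Longrightarrow> x \<in> {1..n} \<Longrightarrow> (cmod n y = x) \<longleftrightarrow> (int x - int a) mod int n = (int y - int a) mod int n"
  using cmod_eq_iff nat_mod_int by blast

lemma cint_iff: assumes "n > 0" "kk \<le> n" "x \<in> {1..n}"
  shows "x \<in> cint n a kk \<longleftrightarrow> (int x - int a) mod int n < int kk"
proof
  assume "x \<in> cint n a kk"
  then obtain t where t: "t < kk" "x = cmod n (a + t)" unfolding cint_def by auto
  then have "(int x - int a) mod int n = (int (a+t) - int a) mod int n"
    using cmod_eq_iff_int assms by metis
  also have "\<dots> = int t" using t assms by simp
  finally show "(int x - int a) mod int n < int kk" using t by simp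
next
  assume h: "(int x - int a) mod int n < int kk"
  define t where "t = nat ((int x - int a) mod int n)"
  have t0: "int t = (int x - int a) mod int n" unfolding t_def using assms by simp
  have "t < kk" using h t0 by linarith
  moreover have "cmod n (a + t) = x"
  proof -
    have "(int (a+t) - int a) mod int n = (int x - int a) mod int n"
      using t0 by simp
    then show ?thesis using cmod_eq_iff_int assms by metis
  qed
  ultimately show "x \<in> cint n a kk" unfolding cint_def by auto
qed

lemma cint_card: assumes "n > 0" "kk \<le> n" shows "card (cint n a kk) = kk"
proof -
  have e: "cint n a kk = (\<lambda>t. cmod n (a + t)) ` {..<kk}" unfolding cint_def by auto
  have "inj_on (\<lambda>t. cmod n (a + t)) {..<kk}"
  proof (rule inj_onI)
    fix t1 t2 assume "t1 \<in> {..<kk}" "t2 \<in> {..<kk}" "cmod n (a + t1) = cmod n (a + t2)"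
    then have "(a + t1) mod n = (a + t2) mod n" "t1 < n" "t2 < n" using cmod_mod assms by (metis, auto)
    then have "(int (a+t1) - int a) mod int n = (int (a+t2) - int a) mod int n" using nat_mod_int by blast
    then have "int t1 mod int n = int t2 mod int n" by simp
    then show "t1 = t2" using \<open>t1 < n\<close> \<open>t2 < n\<close> by simp
  qed
  then show ?thesis using e card_image by fastforce
qed

lemma cint_sub: "n > 0 \<Longrightarrow> cint n a kk \<subseteq> {1..n}"
  unfolding cint_def using cmod_range by auto



definition wt :: "nat \<Rightarrow> (nat \<Rightarrow> nat) \<Rightarrow> (nat \<Rightarrow> nat) \<Rightarrow> arc \<Rightarrow> nat \<Rightarrow> int" where
  "wt n l k e j = (if jumps n l k e j then (if is_reverse e then -1 else 1) else 0)"

lemma step_row: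
  fixes d kk nn :: int
  assumes "0 \<le> d" "d < nn" "1 \<le> kk" "kk < nn"
  shows "of_bool ((d + 1) mod nn < kk) - of_bool (d < kk) = of_bool (d = nn - 1) - (of_bool (d = kk - 1) :: int)"
proof (cases "d + 1 < nn")
  case True
  then have "(d+1) mod nn = d + 1" using assms by simp
  then show ?thesis using assms True by auto
next
  case False
  then have "d = nn - 1" using assms by simp
  then show ?thesis using assms by simp
qed

lemma cmod_shift:
  assumes n: "n > 0" and j: "j \<in> {1..n}" and j0: "j0 \<in> {1..n}"
  shows "cmod n (j+1) = j0 \<longleftrightarrow> cmod n (j0 - 1) = j"
proof -
  have e: "int (j0-1) = int j0 - 1" using j0 by auto
  have "cmod n (j+1) = j0 \<longleftrightarrow> (int j0 - 0) mod int n = (int (j+1) - 0) mod int n"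
    using cmod_eq_iff_int[OF n j0, of "j+1" 0] by simp
  also have "\<dots> \<longleftrightarrow> int n dvd (int j0 - int j - 1)" by (simp add: mod_eq_dvd_iff algebra_simps)
  also have "\<dots> \<longleftrightarrow> int n dvd (int j - (int j0 - 1))"
    by (metis dvd_minus_iff minus_diff_eq diff_diff_eq2 diff_diff_eq)
  also have "\<dots> \<longleftrightarrow> int j mod int n = (int j0 - 1) mod int n" by (rule mod_eq_dvd_iff[symmetric])
  also have "\<dots> \<longleftrightarrow> (int j - 0) mod int n = (int (j0 - 1) - 0) mod int n"
    by (simp only: e diff_zero)
  also have "\<dots> \<longleftrightarrow> cmod n (j0 - 1) = j" using cmod_eq_iff_int[OF n j, of "j0 - 1" 0] by simp
  finally show ?thesis .
qed

lemma step_arc: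
  assumes n: "n > 0" and circ: "circular n m l k" and e: "e \<in> arcs_F n m" and j: "j \<in> {1..n}"
  shows "wt n l k e (cmod n (j+1)) - wt n l k e j
     = of_bool (arc_tail n l k e = j) - of_bool (arc_head n l k e = j)"
proof -
  have j1: "cmod n (j+1) \<in> {1..n}" using cmod_range n by blast
  consider (R) i where "i \<in> {1..m}" "e = RowF i" | (F) j0 where "j0 \<in> {1..n}" "e = ShortF j0"
    | (B) j0 where "j0 \<in> {1..n}" "e = ShortR j0" using e unfolding arcs_F_def by blast
  then show ?thesis
  proof cases
    case R
    define a where "a = l i"
    have a: "a \<in> {1..n}" "2 \<le> k i" "k i \<le> n - 1" using circ R unfolding circular_def a_def by auto
    define d where "d = (int j - int a) mod int n"
    have d: "0 \<le> d" "d < int n" unfolding d_def using n by auto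
    have d1: "(int (cmod n (j+1)) - int a) mod int n = (d + 1) mod int n"
    proof -
      have "cmod n (cmod n (j+1)) = cmod n (j+1)" using cmod_id j1 by blast
      then have "(int (cmod n (j+1)) - int a) mod int n = (int (j+1) - int a) mod int n"
        using cmod_eq_iff_int[OF n j1] by blast
      also have "\<dots> = (d + 1) mod int n" unfolding d_def by (simp add: mod_simps algebra_simps)
      finally show ?thesis .
    qed
    have jc: "jumps n l k e j \<longleftrightarrow> d < int (k i)"
      using cint_iff[OF n _ j, of "k i" a] a R unfolding d_def a_def by simp
    have jc1: "jumps n l k e (cmod n (j+1)) \<longleftrightarrow> (d + 1) mod int n < int (k i)"
      using cint_iff[OF n _ j1, of "k i" a] a R d1 unfolding a_def by simp
    have tl: "arc_tail n l k e = j \<longleftrightarrow> d = int n - 1"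
    proof -
      have "arc_tail n l k e = j \<longleftrightarrow> (int j - int a) mod int n = (int (a - 1) - int a) mod int n"
        using R cmod_eq_iff_int[OF n j] a_def by simp
      also have "\<dots> \<longleftrightarrow> d = int n - 1" using a n unfolding d_def
        by (simp add: of_nat_diff zmod_minus1)
      finally show ?thesis .
    qed
    have hd: "arc_head n l k e = j \<longleftrightarrow> d = int (k i) - 1"
    proof -
      have "arc_head n l k e = j \<longleftrightarrow> (int j - int a) mod int n = (int (a + k i - 1) - int a) mod int n"
        using R cmod_eq_iff_int[OF n j] a_def by simp
      also have "\<dots> \<longleftrightarrow> d = int (k i) - 1" using a n unfolding d_def
        by (simp add: of_nat_diff)
      finally show ?thesis .
    qed
    have "wt n l k e (cmod n (j+1)) - wt n l k e j = of_bool ((d + 1) mod int n < int (k i)) - of_bool (d < int (k i))"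
      unfolding wt_def using jc jc1 R by simp
    also have "\<dots> = of_bool (d = int n - 1) - of_bool (d = int (k i) - 1)"
      using step_row[OF d, of "int (k i)"] a by simp
    finally show ?thesis using tl hd by simp
  next
    case F
    have "cmod n (j+1) = j0 \<longleftrightarrow> cmod n (j0 - 1) = j"
      using cmod_shift[OF n j F(1)] .
    then show ?thesis using F unfolding wt_def by auto
  next
    case B
    have "cmod n (j+1) = j0 \<longleftrightarrow> cmod n (j0 - 1) = j"
      using cmod_shift[OF n j B(1)] .
    then show ?thesis using B unfolding wt_def by auto
  qed
qed



lemma sum_arc:
  assumes n: "n > 0" and circ: "circular n m l k" and e: "e \<in> arcs_F n m"
  shows "(\<Sum>j\<in>{1..n}. wt n l k e j) = arc_len k e"
proof -
  consider (R) i where "i \<in> {1..m}" "e = RowF i" | (F) j0 where "j0 \<in> {1..n}" "e = ShortF j0"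
    | (B) j0 where "j0 \<in> {1..n}" "e = ShortR j0" using e unfolding arcs_F_def by blast
  then show ?thesis
  proof cases
    case R
    have "k i \<le> n - 1" using circ R unfolding circular_def by auto
    then have a: "k i \<le> n" by simp
    have "(\<Sum>j\<in>{1..n}. wt n l k e j) = (\<Sum>j\<in>{1..n}. if j \<in> cint n (l i) (k i) then 1 else 0)"
      unfolding wt_def using R by simp
    also have "\<dots> = int (card ({1..n} \<inter> cint n (l i) (k i)))"
      by (simp add: sum.If_cases)
    also have "{1..n} \<inter> cint n (l i) (k i) = cint n (l i) (k i)" using cint_sub n by blast
    finally show ?thesis using cint_card[OF n a] R by simp
  next
    case F
    then show ?thesis unfolding wt_def by (simp add: sum.delta)
  next
    case B
    then show ?thesis unfolding wt_def by (simp add: sum.delta)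
  qed
qed

lemma sum_list_swap: "(\<Sum>j\<in>A. sum_list (map (\<lambda>e. g e j) xs)) = sum_list (map (\<lambda>e. \<Sum>j\<in>A. g e j) xs)"
  by (induction xs) (auto simp: sum.distrib)

lemma sum_list_rot: "sum_list (map (g :: 'a \<Rightarrow> 'b::comm_monoid_add) (rotate1 xs)) = sum_list (map g xs)"
  by (cases xs) (auto simp: add.commute)

definition ff :: "nat \<Rightarrow> (nat \<Rightarrow> nat) \<Rightarrow> (nat \<Rightarrow> nat) \<Rightarrow> arc list \<Rightarrow> nat \<Rightarrow> int" where
  "ff n l k cs j = sum_list (map (\<lambda>e. wt n l k e j) cs)"

lemma ff_step:
  assumes n: "n > 0" and circ: "circular n m l k" and c: "is_circuit n l k (arcs_F n m) cs" and j: "j \<in> {1..n}"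
  shows "ff n l k cs (cmod n (j+1)) = ff n l k cs j"
proof -
  have sub: "set cs \<subseteq> arcs_F n m" using c unfolding is_circuit_def by blast
  have "ff n l k cs (cmod n (j+1)) - ff n l k cs j
     = sum_list (map (\<lambda>e. wt n l k e (cmod n (j+1)) - wt n l k e j) cs)"
    unfolding ff_def by (simp add: sum_list_subtractf)
  also have "\<dots> = sum_list (map (\<lambda>e. of_bool (arc_tail n l k e = j) - of_bool (arc_head n l k e = j)) cs)"
    by (rule arg_cong[where f=sum_list], rule map_cong, simp, rule step_arc[OF n circ _ j]) (use sub in blast)
  also have "\<dots> = sum_list (map (\<lambda>e. of_bool (arc_tail n l k e = j)) cs) - sum_list (map (\<lambda>e. of_bool (arc_head n l k e = j)) cs)"
    by (simp add: sum_list_subtractf)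
  also have "map (\<lambda>e. of_bool (arc_head n l k e = j)::int) cs = map (\<lambda>e. of_bool (arc_tail n l k e = j)) (rotate1 cs)"
  proof (rule nth_equalityI)
    fix q assume "q < length (map (\<lambda>e. of_bool (arc_head n l k e = j)::int) cs)"
    then have q: "q < length cs" by simp
    then show "map (\<lambda>e. of_bool (arc_head n l k e = j)::int) cs ! q = map (\<lambda>e. of_bool (arc_tail n l k e = j)) (rotate1 cs) ! q"
      using c nth_rotate1[OF q] unfolding is_circuit_def by simp
  qed simp
  finally have "ff n l k cs (cmod n (j+1)) - ff n l k cs j = sum_list (map (\<lambda>e. of_bool (arc_tail n l k e = j)::int) cs)
     - sum_list (map (\<lambda>e. of_bool (arc_tail n l k e = j)) (rotate1 cs))" .
  moreover have "sum_list (map (\<lambda>e. of_bool (arc_tail n l k e = j)::int) (rotate1 cs)) = sum_list (map (\<lambda>e. of_bool (arc_tail n l k e = j)) cs)"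
    by (rule sum_list_rot)
  ultimately show ?thesis by linarith
qed

lemma ff_const:
  assumes n: "n > 0" and circ: "circular n m l k" and c: "is_circuit n l k (arcs_F n m) cs"
  shows "j \<in> {1..n} \<Longrightarrow> ff n l k cs j = ff n l k cs 1"
proof (induction j)
  case 0 then show ?case by simp
next
  case (Suc j)
  show ?case
  proof (cases "j = 0")
    case True then show ?thesis by simp
  next
    case False
    then have j: "j \<in> {1..n}" using Suc.prems by auto
    have "cmod n (j+1) = Suc j" using cmod_id Suc.prems by simp
    then show ?thesis using ff_step[OF n circ c j] Suc.IH j by simp
  qed
qed

lemma winding_ff:
  assumes n: "n > 0" and circ: "circular n m l k" and c: "is_circuit n l k (arcs_F n m) cs"
    and j: "j \<in> {1..n}"
  shows "winding n k cs = ff n l k cs j"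
proof -
  have sub: "set cs \<subseteq> arcs_F n m" using c unfolding is_circuit_def by blast
  have A: "(\<Sum>j\<in>{1..n}. ff n l k cs j) = sum_list (map (\<lambda>e. \<Sum>j\<in>{1..n}. wt n l k e j) cs)"
    unfolding ff_def using sum_list_swap[where g="\<lambda>e j. wt n l k e j" and A="{1..n}" and xs=cs] by simp
  have "\<forall>e\<in>set cs. (\<Sum>j\<in>{1..n}. wt n l k e j) = arc_len k e" using sub sum_arc[OF n circ] by blast
  then have M: "map (\<lambda>e. \<Sum>j\<in>{1..n}. wt n l k e j) cs = map (arc_len k) cs"
    using map_eq_conv by blast
  have B: "sum_list (map (arc_len k) cs) = (\<Sum>j\<in>{1..n}. ff n l k cs j)"
    using trans[OF A arg_cong[where f=sum_list, OF M]] by (rule sym)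
  have C: "(\<Sum>j\<in>{1..n}. ff n l k cs j) = (\<Sum>j\<in>{1..n}. ff n l k cs 1)"
    by (rule sum.cong[OF refl], rule ff_const[OF n circ c])
  have D: "(\<Sum>j\<in>{1..n}. ff n l k cs 1) = int n * ff n l k cs 1" by simp
  have "sum_list (map (arc_len k) cs) = int n * ff n l k cs 1" using B C D by simp
  then show ?thesis unfolding winding_def using n ff_const[OF n circ c j] by simp
qed



lemma ceil_ndvd:
  fixes t p :: int
  assumes "p > 0" "\<not> p dvd t"
  shows "\<lceil>real_of_int t / real_of_int p\<rceil> = t div p + 1"
proof -
  have m0: "t mod p \<noteq> 0" using assms(2) by (simp add: dvd_eq_mod_eq_0)
  have m1: "0 \<le> t mod p" using assms(1) by simp
  have m: "0 < t mod p" "t mod p < p" using m0 m1 pos_mod_bound[OF assms(1)] by auto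
  have e: "real_of_int t = real_of_int p * real_of_int (t div p) + real_of_int (t mod p)"
    by (metis div_mult_mod_eq of_int_add of_int_mult mult.commute)
  have pp: "real_of_int p > 0" using assms by simp
  have "real_of_int (t div p + 1) - 1 < real_of_int t / real_of_int p"
    using m pp e by (simp add: field_simps)
  moreover have "real_of_int t / real_of_int p \<le> real_of_int (t div p + 1)"
  proof -
    have "real_of_int (t mod p) \<le> real_of_int p" using m by simp
    then show ?thesis using pp e by (simp add: field_simps)
  qed
  ultimately show ?thesis by (simp add: ceiling_eq_iff)
qed

definition rp :: "nat \<Rightarrow> (nat \<Rightarrow> nat) \<Rightarrow> (nat \<Rightarrow> nat) \<Rightarrow> arc \<Rightarrow> nat \<Rightarrow> int" where
  "rp n l k e j = (case e of RowF i \<Rightarrow> circ_entry n l k i j | _ \<Rightarrow> 0)"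

lemma ff_decomp:
  assumes c: "is_circuit n l k (arcs_F n m) cs"
  shows "ff n l k cs j = (\<Sum>i\<in>{i \<in> {1..m}. RowF i \<in> set cs}. circ_entry n l k i j)
          + of_bool (ShortF j \<in> set cs) - of_bool (ShortR j \<in> set cs)"
proof -
  let ?S = "set cs"
  have sub: "?S \<subseteq> arcs_F n m" using c unfolding is_circuit_def by blast
  have dist: "distinct cs" using c unfolding is_circuit_def using distinct_map by blast
  have "ff n l k cs j = (\<Sum>e\<in>?S. wt n l k e j)" unfolding ff_def
    using dist by (simp add: sum_list_distinct_conv_sum_set)
  also have "\<dots> = (\<Sum>e\<in>?S. rp n l k e j + of_bool (e = ShortF j) - of_bool (e = ShortR j))"
  proof (rule sum.cong)
    fix e assume "e \<in> ?S"
    then have "e \<in> arcs_F n m" using sub by blast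
    then show "wt n l k e j = rp n l k e j + of_bool (e = ShortF j) - of_bool (e = ShortR j)"
      unfolding arcs_F_def wt_def rp_def circ_entry_def by auto
  qed simp
  also have "\<dots> = (\<Sum>e\<in>?S. rp n l k e j) + of_bool (ShortF j \<in> ?S) - of_bool (ShortR j \<in> ?S)"
    by (simp add: sum.distrib sum_subtractf of_bool_def sum.delta')
  also have "(\<Sum>e\<in>?S. rp n l k e j) = (\<Sum>e\<in>RowF ` {i \<in> {1..m}. RowF i \<in> ?S}. rp n l k e j)"
  proof (rule sum.mono_neutral_right)
    show "\<forall>e\<in>?S - RowF ` {i \<in> {1..m}. RowF i \<in> ?S}. rp n l k e j = 0"
    proof
      fix e assume e: "e \<in> ?S - RowF ` {i \<in> {1..m}. RowF i \<in> ?S}"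
      then have "e \<in> arcs_F n m" using sub by blast
      then show "rp n l k e j = 0" using e unfolding arcs_F_def rp_def by auto
    qed
  qed auto
  also have "\<dots> = (\<Sum>i\<in>{i \<in> {1..m}. RowF i \<in> ?S}. circ_entry n l k i j)"
    by (subst sum.reindex) (auto simp: inj_on_def rp_def)
  finally show ?thesis .
qed

lemma not_both:
  assumes n: "n > 0" and c: "is_circuit n l k (arcs_F n m) cs" and j: "j \<in> {1..n}"
    and f: "ShortF j \<in> set cs" and r: "ShortR j \<in> set cs" and i: "RowF i \<in> set cs"
  shows False
proof -
  let ?L = "length cs"
  obtain q where q: "q < ?L" "cs ! q = ShortF j" using f by (metis in_set_conv_nth)
  obtain q' where q': "q' < ?L" "cs ! q' = ShortR j" using r by (metis in_set_conv_nth)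
  obtain q2 where q2: "q2 < ?L" "cs ! q2 = RowF i" using i by (metis in_set_conv_nth)
  have dt: "distinct (map (arc_tail n l k) cs)" and hc: "\<forall>q < ?L. arc_head n l k (cs ! q) = arc_tail n l k (cs ! ((q + 1) mod ?L))"
    using c unfolding is_circuit_def by auto
  have L0: "?L > 0" using q(1) by linarith
  have inj: "\<And>a b. a < ?L \<Longrightarrow> b < ?L \<Longrightarrow> arc_tail n l k (cs ! a) = arc_tail n l k (cs ! b) \<Longrightarrow> a = b"
    using dt by (simp add: distinct_conv_nth) blast
  have "arc_tail n l k (cs ! ((q + 1) mod ?L)) = j" using hc q by (metis arc_head.simps(2))
  then have a1: "(q+1) mod ?L = q'" using inj[of "(q+1) mod ?L" q'] q' L0 by simp
  have "arc_tail n l k (cs ! ((q' + 1) mod ?L)) = cmod n (j - 1)" using hc q' by (metis arc_head.simps(4))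
  then have a2: "(q'+1) mod ?L = q" using inj[of "(q'+1) mod ?L" q] q L0 by simp
  have qq: "q \<noteq> q'" using q q' by auto
  have "?L = 2 \<and> {q, q'} = {0, 1}"
  proof (cases "q + 1 < ?L")
    case True
    then have "q' = q + 1" using a1 by simp
    have q2L: "q + 2 = ?L"
    proof (rule ccontr)
      assume "q + 2 \<noteq> ?L"
      then have "q + 2 < ?L" using True by linarith
      then have "(q' + 1) mod ?L = q + 2" using \<open>q' = q + 1\<close> by simp
      then show False using a2 by simp
    qed
    then have "q = 0" using a2 \<open>q' = q + 1\<close> by simp
    then show ?thesis using q2L \<open>q' = q + 1\<close> by auto
  next
    case False
    then have "q + 1 = ?L" using q by simp
    then have "q' = 0" using a1 by simp
    then show ?thesis using a2 q qq \<open>q + 1 = ?L\<close> by (cases "?L = 1") auto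
  qed
  note LQ = this
  have L2: "?L = 2" using LQ by (rule conjunct1)
  have Q: "{q, q'} = {0, 1}" using LQ by (rule conjunct2)
  have "q2 \<in> {0, 1}" using q2(1) L2 by auto
  then have "q2 \<in> {q, q'}" using Q by simp
  then have "q2 = q \<or> q2 = q'" by simp
  then show False
  proof
    assume "q2 = q" then show False using q(2) q2(2) by simp
  next
    assume "q2 = q'" then show False using q'(2) q2(2) by simp
  qed
qed

lemma pminus_eq:
  assumes c: "is_circuit n l k (arcs_F n m) cs"
  shows "pminus n l k cs j = of_bool (ShortR j \<in> set cs)"
proof -
  have sub: "set cs \<subseteq> arcs_F n m" using c unfolding is_circuit_def by blast
  have "{e \<in> set cs. is_reverse e \<and> jumps n l k e j} = (if ShortR j \<in> set cs then {ShortR j} else {})"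
    using sub unfolding arcs_F_def by auto
  then show ?thesis unfolding pminus_def by simp
qed



theorem theorem6p2:
  fixes n m \<alpha> :: nat and l k :: "nat \<Rightarrow> nat" and cs :: "arc list" and s p :: int
  assumes circ: "circular n m l k"
    and alpha: "\<alpha> > 0"
    and circuit: "is_circuit n l k (arcs_F n m) cs"
    and s_def: "s = int (card {i \<in> {1..m}. RowF i \<in> set cs})"
    and p_def: "p = winding n k cs"
    and ndvd: "\<not> p dvd tval m cs (\<lambda>_. int \<alpha>)"
    and p_ge: "2 \<le> p"
    and p_le: "p \<le> tval m cs (\<lambda>_. int \<alpha>) - 1"
  shows "(let r = int \<alpha> * s - p * \<lfloor>real_of_int (int \<alpha> * s) / real_of_int p\<rfloor>
          in (\<forall>j\<in>{1..n}. fst (gamma_ineq n m l k cs (\<lambda>_. int \<alpha>)) j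
                          = (if j \<in> otimes n cs then r + 1 else r))
             \<and> snd (gamma_ineq n m l k cs (\<lambda>_. int \<alpha>))
                 = r * \<lceil>real_of_int (int \<alpha> * s) / real_of_int p\<rceil>)
       \<and> ((\<alpha> = 1 \<and> otimes n cs \<noteq> {}) \<longrightarrow>
          (let F = {i \<in> {1..m}. RowF i \<in> set cs}; a = circ_entry n l k;
               ps = pstar n a F
           in rfi_valid F ps
              \<and> (\<forall>j\<in>{1..n}. fst (gamma_ineq n m l k cs (\<lambda>_. 1)) j = fst (rfi a F ps) j)
              \<and> snd (gamma_ineq n m l k cs (\<lambda>_. 1)) = snd (rfi a F ps)))"
proof -
  define F where "F = {i \<in> {1..m}. RowF i \<in> set cs}"
  have sub: "set cs \<subseteq> arcs_F n m" using circuit unfolding is_circuit_def by blast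
  have RR: "{i \<in> {1..m}. RowR i \<in> set cs} = {}" using sub unfolding arcs_F_def by auto
  have finF: "finite F" unfolding F_def by simp
  have tv: "\<And>b. tval m cs (\<lambda>_. int b) = int b * s"
    unfolding tval_def RR s_def F_def by simp
  have tv1: "tval m cs (\<lambda>_. 1) = s" using tv[of 1] by simp
  have sge: "int \<alpha> * s \<ge> 3" using p_le p_ge tv by simp
  have "s > 0" using sge alpha by (smt (verit) mult_nonneg_nonpos of_nat_0_le_iff)
  then have "card F > 0" using s_def F_def by simp
  then have "F \<noteq> {}" by (metis card.empty less_irrefl)
  then obtain i0 where "i0 \<in> F" by blast
  then have "n \<ge> 3" using circ unfolding F_def circular_def by fastforce
  then have n: "n > 0" by simp
  have pw: "\<And>j. j \<in> {1..n} \<Longrightarrow> p = ff n l k cs j" using winding_ff[OF n circ circuit] p_def by simp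
  have ot: "\<And>j. j \<in> {1..n} \<Longrightarrow> j \<in> otimes n cs \<longleftrightarrow> ShortR j \<in> set cs"
    unfolding otimes_def by simp
  have p0: "p > 0" using p_ge by simp
  have gam: "\<And>b. \<not> p dvd int b * s \<Longrightarrow>
     (let r = int b * s - p * \<lfloor>real_of_int (int b * s) / real_of_int p\<rfloor>
          in (\<forall>j\<in>{1..n}. fst (gamma_ineq n m l k cs (\<lambda>_. int b)) j
                          = (if j \<in> otimes n cs then r + 1 else r))
             \<and> snd (gamma_ineq n m l k cs (\<lambda>_. int b))
                 = r * \<lceil>real_of_int (int b * s) / real_of_int p\<rceil>)"
  proof -
    fix b :: nat assume nd: "\<not> p dvd int b * s"
    have ce: "\<lceil>real_of_int (int b * s) / real_of_int p\<rceil> = \<lfloor>real_of_int (int b * s) / real_of_int p\<rfloor> + 1"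
    proof -
      have fl: "\<lfloor>real_of_int (int b * s) / real_of_int p\<rfloor> = int b * s div p" by (rule floor_divide_of_int_eq)
      show ?thesis unfolding fl by (rule ceil_ndvd[OF p0 nd])
    qed
    show "?thesis b"
      unfolding gamma_ineq_def Let_def tv p_def[symmetric] RR
      using ce ot pminus_eq[OF circuit] by (auto simp: algebra_simps)
  qed
  have part1: "let r = int \<alpha> * s - p * \<lfloor>real_of_int (int \<alpha> * s) / real_of_int p\<rfloor>
          in (\<forall>j\<in>{1..n}. fst (gamma_ineq n m l k cs (\<lambda>_. int \<alpha>)) j
                          = (if j \<in> otimes n cs then r + 1 else r))
             \<and> snd (gamma_ineq n m l k cs (\<lambda>_. int \<alpha>))
                 = r * \<lceil>real_of_int (int \<alpha> * s) / real_of_int p\<rceil>"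
    using gam[of \<alpha>] ndvd tv by simp
  have part2: "(let F = {i \<in> {1..m}. RowF i \<in> set cs}; a = circ_entry n l k;
               ps = pstar n a F
           in rfi_valid F ps
              \<and> (\<forall>j\<in>{1..n}. fst (gamma_ineq n m l k cs (\<lambda>_. 1)) j = fst (rfi a F ps) j)
              \<and> snd (gamma_ineq n m l k cs (\<lambda>_. 1)) = snd (rfi a F ps))"
    if a1: "\<alpha> = 1" and ne: "otimes n cs \<noteq> {}"
  proof -
    define cov where "cov j = (\<Sum>i\<in>F. circ_entry n l k i j)" for j
    have i0s: "RowF i0 \<in> set cs" using \<open>i0 \<in> F\<close> unfolding F_def by simp
    have pc: "p = cov j + of_bool (ShortF j \<in> set cs) - of_bool (ShortR j \<in> set cs)"
      if j: "j \<in> {1..n}" for j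
      using pw[OF j] ff_decomp[OF circuit, of j] unfolding cov_def F_def by simp
    have nb: "\<not> (ShortF j \<in> set cs \<and> ShortR j \<in> set cs)" if j: "j \<in> {1..n}" for j
      using not_both[OF n circuit j _ _ i0s] by blast
    have cle: "cov j \<le> p + 1" if j: "j \<in> {1..n}" for j
      using pc[OF j] nb[OF j] by (cases "ShortF j \<in> set cs"; cases "ShortR j \<in> set cs") auto
    have ceq: "cov j = p + 1 \<longleftrightarrow> ShortR j \<in> set cs" if j: "j \<in> {1..n}" for j
      using pc[OF j] nb[OF j] by (cases "ShortF j \<in> set cs"; cases "ShortR j \<in> set cs") auto
    have cle2: "cov j \<le> p \<or> cov j = p + 1" if j: "j \<in> {1..n}" for j
      using cle[OF j] by linarith
    obtain j0 where j0: "j0 \<in> otimes n cs" using ne by blast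
    then have j0n: "j0 \<in> {1..n}" unfolding otimes_def by simp
    have cj0: "cov j0 = p + 1" using ceq[OF j0n] ot[OF j0n] j0 by simp
    have "Max (cov ` {1..n}) = p + 1"
    proof (rule Max_eqI)
      show "finite (cov ` {1..n})" by simp
      show "\<And>y. y \<in> cov ` {1..n} \<Longrightarrow> y \<le> p + 1" using cle by blast
      show "p + 1 \<in> cov ` {1..n}" using cj0 j0n by (metis image_eqI)
    qed
    then have ps: "pstar n (circ_entry n l k) F = p" unfolding pstar_def cov_def by simp
    have cF: "int (card F) = s" using s_def F_def by simp
    have s1: "tval m cs (\<lambda>_. int \<alpha>) = s" using tv[of \<alpha>] a1 by simp
    have valid: "rfi_valid F p" unfolding rfi_valid_def
      using cF s1 p_le p_ge ndvd by auto
    have g1: "(\<lambda>_. 1::int) = (\<lambda>_. int \<alpha>)" using a1 by simp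
    have P: "(\<forall>j\<in>{1..n}. fst (gamma_ineq n m l k cs (\<lambda>_. 1)) j
                          = (if j \<in> otimes n cs then (s - p * \<lfloor>real_of_int s / real_of_int p\<rfloor>) + 1
                             else s - p * \<lfloor>real_of_int s / real_of_int p\<rfloor>))
             \<and> snd (gamma_ineq n m l k cs (\<lambda>_. 1))
                 = (s - p * \<lfloor>real_of_int s / real_of_int p\<rfloor>) * \<lceil>real_of_int s / real_of_int p\<rceil>"
      using part1 a1 unfolding Let_def by simp
    have fr: "fst (rfi (circ_entry n l k) F p) j = (if j \<in> otimes n cs then (s - p * \<lfloor>real_of_int s / real_of_int p\<rfloor>) + 1
                             else s - p * \<lfloor>real_of_int s / real_of_int p\<rfloor>)" if j: "j \<in> {1..n}" for j
    proof (cases "ShortR j \<in> set cs")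
      case True
      then have "cov j = p + 1" using ceq[OF j] by simp
      then show ?thesis using True ot[OF j] cF unfolding rfi_def Let_def cov_def[symmetric] by simp
    next
      case False
      then have "cov j \<le> p" using ceq[OF j] cle2[OF j] by auto
      then show ?thesis using False ot[OF j] cF unfolding rfi_def Let_def cov_def[symmetric] by simp
    qed
    have sr: "snd (rfi (circ_entry n l k) F p) = (s - p * \<lfloor>real_of_int s / real_of_int p\<rfloor>) * \<lceil>real_of_int s / real_of_int p\<rceil>"
      unfolding rfi_def Let_def using cF by simp
    show ?thesis unfolding Let_def F_def[symmetric] ps using valid P fr sr by simp
  qed
  show ?thesis using part1 part2 by blast
qed


end
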